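(* Let $S$ be a left amenable semitopological semigroup, let $E=F^{*}$ be a dual Banach space and let $C\subset E$ be a nonempty weak$^*$-compact set. Let $\{T_s:s\in S\}$ be a representation of $S$ on $C$ such that the family $\{T_s:s\in S\}$ is (as a semigroup under composition) generated by firmly nonexpansive mappings, and such that the map $S\times C\ni(s,x)\mapsto T_sx\in C$ is jointly continuous, where $C$ carries the weak$^*$ topology. Then there is $x\in C$ with $T_sx=x$ for all $s\in S$.
   Context: A semitopological semigroup is a semigroup $S$ with a Hausdorff topology such that $s\mapsto ts$ and $s\mapsto st$ are continuous for each $t\in S$. A representation of $S$ on $C$ is a family of maps $T_s:C\to C$ with $T_{st}x=T_s(T_tx)$ for all $s,t\in S$, $x\in C$. For $f\in\ell^\infty(S)$ let $(l_sf)(t)=f(st)$. $LUC(S)$ is the space of bounded continuous real functions $f$ on $S$ such that $s\mapsto l_sf$ is continuous into $C_b(S)$ with the sup norm. $S$ is left amenable if there is $\mu\in LUC(S)^*$ with $\|\mu\|=\mu(1)=1$ and $\mu(l_sf)=\mu(f)$ for all $s\in S$, $f\in LUC(S)$. A map $T:C\to C$ is firmly nonexpansive if $\|Tx-Ty\|\le\|\alpha(x-y)+(1-\alpha)(Tx-Ty)\|$ for all $x,y\in C$, $\alpha\in(0,1)$ (norm of $E$). *)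

theory Defs
  imports "HOL-Analysis.Analysis"
begin

text \<open>The dual Banach space E = F* is modelled as the type of bounded linear
functionals on F, with its operator (dual) norm.\<close>

definition weak_star_topology :: "('f::real_normed_vector \<Rightarrow>\<^sub>L real) topology" where
  "weak_star_topology =
     topology_generated_by {{x. blinfun_apply x f \<in> U} | f U. open U}"

definition semitopological_semigroup :: "'s::{semigroup_mult, t2_space} itself \<Rightarrow> bool" where
  "semitopological_semigroup _ \<longleftrightarrow>
     (\<forall>t::'s. continuous_on UNIV (\<lambda>s. t * s) \<and> continuous_on UNIV (\<lambda>s. s * t))"

text \<open>LUC(S): bounded continuous real functions f such that s \<mapsto> l_s f is continuous
into C_b(S) with the sup norm, where (l_s f)(t) = f(s t).\<close>

definition LUC :: "('s::{semigroup_mult, topological_space} \<Rightarrow> real) set" where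
  "LUC = {f. continuous_on UNIV f \<and> bounded (range f) \<and>
             (\<forall>s0. \<forall>e>0. \<exists>U. open U \<and> s0 \<in> U \<and>
                 (\<forall>s\<in>U. \<forall>t. \<bar>f (s * t) - f (s0 * t)\<bar> \<le> e))}"

text \<open>Left amenability: a left invariant mean on LUC(S), i.e. a linear functional
\<mu> on LUC(S) with \<parallel>\<mu>\<parallel> = \<mu>(1) = 1 and \<mu>(l_s f) = \<mu>(f).  The norm condition is written
as |\<mu> f| \<le> sup |f| on LUC(S) together with \<mu>(1) = 1 (which forces \<parallel>\<mu>\<parallel> = 1).\<close>

definition left_amenable :: "'s::{semigroup_mult, topological_space} itself \<Rightarrow> bool" where
  "left_amenable _ \<longleftrightarrow>
     (\<exists>\<mu> :: ('s \<Rightarrow> real) \<Rightarrow> real.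
        (\<forall>f\<in>LUC. \<forall>g\<in>LUC. \<forall>a b. \<mu> (\<lambda>t. a * f t + b * g t) = a * \<mu> f + b * \<mu> g) \<and>
        (\<forall>f\<in>LUC. \<bar>\<mu> f\<bar> \<le> (SUP t. \<bar>f t\<bar>)) \<and>
        \<mu> (\<lambda>_. 1) = 1 \<and>
        (\<forall>f\<in>LUC. \<forall>s. \<mu> (\<lambda>t. f (s * t)) = \<mu> f))"

definition firmly_nonexpansive_on :: "'e::real_normed_vector set \<Rightarrow> ('e \<Rightarrow> 'e) \<Rightarrow> bool" where
  "firmly_nonexpansive_on C T \<longleftrightarrow>
     (\<forall>x\<in>C. \<forall>y\<in>C. \<forall>\<alpha>::real. 0 < \<alpha> \<and> \<alpha> < 1 \<longrightarrow>
        norm (T x - T y) \<le> norm (\<alpha> *\<^sub>R (x - y) + (1 - \<alpha>) *\<^sub>R (T x - T y)))"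

text \<open>The semigroup (under composition, no identity adjoined) generated by G.\<close>

inductive_set comp_semigroup :: "('a \<Rightarrow> 'a) set \<Rightarrow> ('a \<Rightarrow> 'a) set" for G where
  gen: "g \<in> G \<Longrightarrow> g \<in> comp_semigroup G"
| comp: "f \<in> comp_semigroup G \<Longrightarrow> g \<in> comp_semigroup G \<Longrightarrow> f \<circ> g \<in> comp_semigroup G"

definition representation_on :: "'e set \<Rightarrow> ('s::semigroup_mult \<Rightarrow> 'e \<Rightarrow> 'e) \<Rightarrow> bool" where
  "representation_on C T \<longleftrightarrow>
     (\<forall>s. \<forall>x\<in>C. T s x \<in> C) \<and> (\<forall>s t. \<forall>x\<in>C. T (s * t) x = T s (T t x))"

end

theory Submission imports Defs begin

lemma asym_fix:
  fixes g :: "'a::real_normed_vector \<Rightarrow> 'a" and C :: "'a set"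
  assumes gC: "\<And>x. x \<in> C \<Longrightarrow> g x \<in> C"
    and firm: "\<And>x y. x \<in> C \<Longrightarrow> y \<in> C \<Longrightarrow>
        norm (g x - g y) \<le> norm ((1/2) *\<^sub>R (x - y) + (1/2) *\<^sub>R (g x - g y))"
    and bnd: "\<And>x. x \<in> C \<Longrightarrow> norm x \<le> R"
    and xC: "x \<in> C"
    and xin: "\<And>n. x \<in> (g ^^ n) ` C"
  shows "g x = x"
proof -
  have powC: "(g ^^ n) z \<in> C" if "z \<in> C" for n z
    using that by (induction n) (auto intro: gC)
  define E where "E k i = (SUP z\<in>(g^^i)`C. norm (z - (g^^k) z))" for k i
  have ne: "(g^^i)`C \<noteq> {}" for i using xC by auto
  have imC: "(g^^i)`C \<subseteq> C" for i using powC by auto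
  have nb: "norm (z - (g^^k) z) \<le> 2*R" if "z \<in> C" for z k
  proof -
    have "norm (z - (g^^k) z) \<le> norm z + norm ((g^^k) z)" by (rule norm_triangle_ineq4)
    also have "\<dots> \<le> 2*R" using bnd[OF that] bnd[OF powC[OF that, of k]] by simp
    finally show ?thesis .
  qed
  have bdd: "bdd_above ((\<lambda>z. norm (z - (g^^k) z)) ` (g^^i)`C)" for k i
    using nb imC by (intro bdd_aboveI[of _ "2*R"]) blast
  have E_upper: "norm (z - (g^^k) z) \<le> E k i" if "z \<in> (g^^i)`C" for z k i
    unfolding E_def using bdd that by (intro cSUP_upper) auto
  have E_le: "E k i \<le> 2*R" for k i
    unfolding E_def using ne imC nb by (intro cSUP_least) auto
  have E_ge: "0 \<le> E k i" for k i
    using E_upper[of "(g^^i) x" i k] xC by (meson imageI norm_ge_zero order_trans)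
  have E0: "E 0 i = 0" for i
    unfolding E_def using ne by simp
  have sub: "(g^^Suc i)`C \<subseteq> (g^^i)`C" for i
  proof
    fix w assume "w \<in> (g^^Suc i)`C"
    then obtain y where y: "y \<in> C" "w = (g^^Suc i) y" by auto
    then have "w = (g^^i) (g y)" by (simp add: funpow_swap1)
    then show "w \<in> (g^^i)`C" using gC[OF y(1)] by auto
  qed
  have E_mono: "E k (Suc i) \<le> E k i" for k i
    unfolding E_def[of k "Suc i"]
  proof (rule cSUP_least[OF ne])
    fix z assume "z \<in> (g^^Suc i)`C"
    then have "z \<in> (g^^i)`C" using sub by blast
    then show "norm (z - (g^^k) z) \<le> E k i" by (rule E_upper)
  qed
  have E_rec: "2 * E (Suc k) (Suc i) \<le> E (Suc (Suc k)) i + E k (Suc i)" for k i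
  proof -
    have "norm (w - (g^^Suc k) w) \<le> (E (Suc (Suc k)) i + E k (Suc i)) / 2"
      if w: "w \<in> (g^^Suc i)`C" for w
    proof -
      obtain y where y: "y \<in> C" "w = (g^^Suc i) y" using w by auto
      define z where "z = (g^^i) y"
      have zC: "z \<in> C" unfolding z_def using powC y by auto
      have zi: "z \<in> (g^^i)`C" unfolding z_def using y by auto
      have wz: "w = g z" unfolding z_def y by simp
      have z2: "(g^^Suc k) z \<in> C" using powC zC by blast
      have "norm (w - (g^^Suc k) w) = norm (g z - g ((g^^Suc k) z))"
        unfolding wz by (simp add: funpow_swap1)
      also have "\<dots> \<le> norm ((1/2) *\<^sub>R (z - (g^^Suc k) z) + (1/2) *\<^sub>R (g z - g ((g^^Suc k) z)))"
        using firm[OF zC z2] .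
      also have "(1/2) *\<^sub>R (z - (g^^Suc k) z) + (1/2) *\<^sub>R (g z - g ((g^^Suc k) z))
          = (1/2) *\<^sub>R ((z - (g^^Suc (Suc k)) z) + (w - (g^^k) w))"
        unfolding wz by (simp add: funpow_swap1 algebra_simps)
      also have "norm \<dots> \<le> (1/2) * (norm (z - (g^^Suc (Suc k)) z) + norm (w - (g^^k) w))"
        by (simp add: norm_triangle_ineq)
      also have "\<dots> \<le> (1/2) * (E (Suc (Suc k)) i + E k (Suc i))"
        using E_upper[OF zi, of "Suc (Suc k)"] E_upper[OF w, of k] by simp
      finally show ?thesis by simp
    qed
    then have "E (Suc k) (Suc i) \<le> (E (Suc (Suc k)) i + E k (Suc i)) / 2"
      unfolding E_def[of "Suc k" "Suc i"] using ne by (intro cSUP_least) auto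
    then show ?thesis by simp
  qed
  have "\<exists>L. E k \<longlonglongrightarrow> L" for k
  proof -
    have "decseq (E k)" using E_mono by (simp add: decseq_SucI)
    then obtain L where "E k \<longlonglongrightarrow> L" using decseq_convergent[of "E k" 0] E_ge by metis
    then show ?thesis by blast
  qed
  then obtain L where L: "\<And>k. E k \<longlonglongrightarrow> L k" by metis
  have L0: "L 0 = 0" using L[of 0] unfolding E0 by (simp add: LIMSEQ_const_iff)
  have Lle: "L k \<le> 2*R" for k using L[of k] E_le by (intro LIMSEQ_le_const2) auto
  have Lrec: "2 * L (Suc k) \<le> L (Suc (Suc k)) + L k" for k
  proof -
    have a: "(\<lambda>i. 2 * E (Suc k) (Suc i)) \<longlonglongrightarrow> 2 * L (Suc k)"
      by (intro tendsto_mult_left LIMSEQ_Suc L)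
    have b: "(\<lambda>i. E (Suc (Suc k)) i + E k (Suc i)) \<longlonglongrightarrow> L (Suc (Suc k)) + L k"
      by (intro tendsto_add L LIMSEQ_Suc)
    show ?thesis using LIMSEQ_le[OF a b] E_rec by blast
  qed
  have conv: "L (Suc k) - L k \<ge> L 1 \<and> L k \<ge> real k * L 1" for k
  proof (induction k)
    case 0 then show ?case using L0 by simp
  next
    case (Suc k)
    then show ?case using Lrec[of k] by (simp add: algebra_simps)
  qed
  have L1: "L 1 \<le> 0"
  proof (rule ccontr)
    assume "\<not> L 1 \<le> 0"
    then have pos: "L 1 > 0" by simp
    obtain k :: nat where k: "real k > 2*R / L 1" using reals_Archimedean2 by blast
    then have "real k * L 1 > 2*R" using pos by (simp add: field_simps)
    then show False using conv[of k] Lle[of k] by simp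
  qed
  have "norm (x - (g^^1) x) \<le> L 1"
    using L[of 1] E_upper[OF xin, of 1] by (intro LIMSEQ_le_const) auto
  then have "norm (x - g x) \<le> L 1" by simp
  then have "norm (x - g x) = 0" using L1 norm_ge_zero[of "x - g x"] by linarith
  then show ?thesis by simp
qed



lemma ubp:
  fixes C :: "('f::banach \<Rightarrow>\<^sub>L real) set"
  assumes bd: "\<And>f. \<exists>M. \<forall>x\<in>C. \<bar>blinfun_apply x f\<bar> \<le> M"
  shows "\<exists>R. \<forall>x\<in>C. norm x \<le> R"
proof -
  define Tn where "Tn n = {f. \<forall>x\<in>C. \<bar>blinfun_apply x f\<bar> \<le> real n}" for n :: nat
  have clo: "closed (Tn n)" for n
  proof -
    have "Tn n = (\<Inter>x\<in>C. {f. \<bar>blinfun_apply x f\<bar> \<le> real n})" unfolding Tn_def by auto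
    moreover have "closed {f. \<bar>blinfun_apply x f\<bar> \<le> real n}" for x
      by (intro closed_Collect_le continuous_intros)
    ultimately show ?thesis by auto
  qed
  have cover: "\<Union>(range Tn) = UNIV"
  proof -
    have "f \<in> \<Union>(range Tn)" for f
    proof -
      obtain M where M: "\<forall>x\<in>C. \<bar>blinfun_apply x f\<bar> \<le> M" using bd by blast
      obtain n :: nat where "M \<le> real n" using real_arch_simple by blast
      then have "f \<in> Tn n" using M unfolding Tn_def by force
      then show ?thesis by blast
    qed
    then show ?thesis by blast
  qed
  have "\<exists>n. interior (Tn n) \<noteq> {}"
  proof (rule ccontr)
    assume "\<nexists>n. interior (Tn n) \<noteq> {}"
    then have "euclidean interior_of \<Union>(range Tn) = {}"
      by (intro Baire_category_alt) (auto simp: completely_metrizable_space_euclidean clo)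
    then show False using cover by simp
  qed
  then obtain n f0 where "f0 \<in> interior (Tn n)" by blast
  then obtain r where r: "r > 0" "ball f0 r \<subseteq> Tn n"
    by (meson open_contains_ball_eq open_interior interior_subset order_trans)
  have "norm x \<le> 4 * real n / r" if x: "x \<in> C" for x
  proof (rule norm_blinfun_bound)
    show "0 \<le> 4 * real n / r" using r by simp
    fix h
    show "norm (blinfun_apply x h) \<le> 4 * real n / r * norm h"
    proof (cases "h = 0")
      case True then show ?thesis by simp
    next
      case False
      define h' where "h' = (r / 2 / norm h) *\<^sub>R h"
      have nh': "norm h' = r / 2" using False r unfolding h'_def by simp
      have "f0 + h' \<in> ball f0 r" using nh' r by (simp add: dist_norm)
      then have a: "\<bar>blinfun_apply x (f0 + h')\<bar> \<le> real n" using r x unfolding Tn_def by blast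
      have "f0 \<in> ball f0 r" using r by simp
      then have b: "\<bar>blinfun_apply x f0\<bar> \<le> real n" using r x unfolding Tn_def by blast
      have "blinfun_apply x (f0 + h') = blinfun_apply x f0 + blinfun_apply x h'"
        by (simp add: blinfun.add_right)
      then have c: "\<bar>blinfun_apply x h'\<bar> \<le> 2 * real n" using a b by linarith
      have "blinfun_apply x h' = (r / 2 / norm h) * blinfun_apply x h"
        unfolding h'_def by (simp add: blinfun.scaleR_right)
      then have "(r / 2 / norm h) * \<bar>blinfun_apply x h\<bar> \<le> 2 * real n"
        using c r by (simp add: abs_mult)
      then have "\<bar>blinfun_apply x h\<bar> \<le> 2 * real n * (2 * norm h / r)"
        using r False by (simp add: field_simps)
      then show ?thesis by (simp add: field_simps)
    qed
  qed
  then show ?thesis by blast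
qed



lemma wst_topspace [simp]: "topspace weak_star_topology = UNIV"
  unfolding weak_star_topology_def topology_generated_by_topspace
  by (auto intro!: exI[of _ "{x. blinfun_apply x 0 \<in> UNIV}"])

lemma wst_ev_cont: "continuous_map weak_star_topology euclideanreal (\<lambda>x. blinfun_apply x f)"
  unfolding continuous_map
proof (intro conjI allI impI)
  fix U :: "real set" assume "openin euclideanreal U"
  then have "open U" by simp
  then have "{x. blinfun_apply x f \<in> U} \<in> {{x. blinfun_apply x f \<in> U} | f U. open U}" by blast
  then have "openin weak_star_topology {x. blinfun_apply x f \<in> U}"
    unfolding weak_star_topology_def by (rule topology_generated_by_Basis)
  then show "openin weak_star_topology {x \<in> topspace weak_star_topology. blinfun_apply x f \<in> U}"
    by simp
qed auto

lemma wst_Hausdorff: "Hausdorff_space weak_star_topology"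
  unfolding Hausdorff_space_def
proof (intro allI impI)
  fix x y :: "'f::real_normed_vector \<Rightarrow>\<^sub>L real"
  assume "x \<in> topspace weak_star_topology \<and> y \<in> topspace weak_star_topology \<and> x \<noteq> y"
  then have "x \<noteq> y" by blast
  then obtain f where f: "blinfun_apply x f \<noteq> blinfun_apply y f" using blinfun_eqI by metis
  then obtain U V where UV: "open U" "open V" "blinfun_apply x f \<in> U" "blinfun_apply y f \<in> V" "U \<inter> V = {}"
    using hausdorff by metis
  have oU: "openin weak_star_topology {z \<in> topspace weak_star_topology. blinfun_apply z f \<in> U}"
    using UV wst_ev_cont[of f] by (intro openin_continuous_map_preimage) auto
  have oV: "openin weak_star_topology {z \<in> topspace weak_star_topology. blinfun_apply z f \<in> V}"
    using UV wst_ev_cont[of f] by (intro openin_continuous_map_preimage) auto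
  show "\<exists>U V. openin weak_star_topology U \<and> openin weak_star_topology V \<and> x \<in> U \<and> y \<in> V \<and> disjnt U V"
    using oU oV UV
    by (intro exI[of _ "{z \<in> topspace weak_star_topology. blinfun_apply z f \<in> U}"]
        exI[of _ "{z \<in> topspace weak_star_topology. blinfun_apply z f \<in> V}"] conjI) (auto simp: disjnt_def)
qed



lemma common_point:
  fixes T :: "'s::{semigroup_mult, t2_space} \<Rightarrow> 'e \<Rightarrow> 'e" and X :: "'e topology"
  assumes amen: "left_amenable TYPE('s)"
    and tX: "topspace X = C" and Cne: "C \<noteq> {}"
    and cpt: "compact_space X" and haus: "Hausdorff_space X"
    and rep: "representation_on C T"
    and cont: "continuous_map (prod_topology euclidean X) X (\<lambda>(s, x). T s x)"
  shows "\<exists>x\<in>C. \<forall>s. x \<in> T s ` C"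
proof -
  obtain \<mu> :: "('s \<Rightarrow> real) \<Rightarrow> real" where
    lin: "\<forall>f\<in>LUC. \<forall>g\<in>LUC. \<forall>a b. \<mu> (\<lambda>t. a * f t + b * g t) = a * \<mu> f + b * \<mu> g" and
    bnd: "\<forall>f\<in>LUC. \<bar>\<mu> f\<bar> \<le> (SUP t. \<bar>f t\<bar>)" and
    one: "\<mu> (\<lambda>_. 1) = 1" and
    inv: "\<forall>f\<in>LUC. \<forall>s. \<mu> (\<lambda>t. f (s * t)) = \<mu> f"
    using amen unfolding left_amenable_def by blast
  have TC: "T s y \<in> C" if "y \<in> C" for s y using rep that unfolding representation_on_def by blast
  have Tmul: "T (s * t) y = T s (T t y)" if "y \<in> C" for s t y
    using rep that unfolding representation_on_def by blast
  obtain x0 where x0: "x0 \<in> C" using Cne by blast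
  have cC: "compactin X C" using cpt tX by (simp add: compact_space_def)
  have Tcont: "continuous_map X X (T s)" for s
  proof -
    have "continuous_map X (prod_topology euclidean X) (\<lambda>x. (s, x))"
      by (intro continuous_map_pairedI) auto
    from continuous_map_compose[OF this cont] show ?thesis by (simp add: o_def)
  qed
  have Ocont: "continuous_map euclidean X (\<lambda>s. T s x0)"
  proof -
    have "continuous_map euclidean (prod_topology euclidean X) (\<lambda>s. (s, x0))"
      using x0 tX by (intro continuous_map_pairedI) auto
    from continuous_map_compose[OF this cont] show ?thesis by (simp add: o_def)
  qed
  have hbound: "\<exists>M. \<forall>y\<in>C. \<bar>h y\<bar> \<le> M" if hc: "continuous_map X euclideanreal h" for h
  proof -
    have "compactin euclideanreal (h ` C)" by (rule image_compactin[OF cC hc])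
    then have "bounded (h ` C)" by (simp add: compact_imp_bounded)
    then show ?thesis unfolding bounded_iff by auto
  qed
  have LUC: "(\<lambda>s. h (T s x0)) \<in> LUC" if hc: "continuous_map X euclideanreal h" for h
  proof -
    have c1: "continuous_on UNIV (\<lambda>s. h (T s x0))"
      using continuous_map_compose[OF Ocont hc] by (simp add: o_def)
    obtain M where M: "\<forall>y\<in>C. \<bar>h y\<bar> \<le> M" using hbound[OF hc] by blast
    have c2: "bounded (range (\<lambda>s. h (T s x0)))"
      unfolding bounded_iff using M TC[OF x0] by (intro exI[of _ M]) auto
    have c3: "\<exists>U. open U \<and> s0 \<in> U \<and> (\<forall>s\<in>U. \<forall>t. \<bar>h (T (s * t) x0) - h (T (s0 * t) x0)\<bar> \<le> e)"
      if e: "e > 0" for s0 e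
    proof -
      define F where "F p = \<bar>h (T (fst p) (snd p)) - h (T s0 (snd p))\<bar>" for p
      have Fc: "continuous_map (prod_topology euclidean X) euclideanreal F"
      proof -
        have a: "continuous_map (prod_topology euclidean X) euclideanreal (\<lambda>p. h (T (fst p) (snd p)))"
          using continuous_map_compose[OF cont hc] by (simp add: o_def case_prod_beta)
        have b: "continuous_map (prod_topology euclidean X) euclideanreal (\<lambda>p. h (T s0 (snd p)))"
          using continuous_map_compose[OF continuous_map_compose[OF continuous_map_snd Tcont[of s0]] hc]
          by (simp add: o_def)
        show ?thesis unfolding F_def by (intro continuous_map_real_abs continuous_map_diff a b)
      qed
      define W where "W = {p \<in> topspace (prod_topology euclidean X). F p \<in> {..<e}}"
      have Wo: "openin (prod_topology euclidean X) W"
        unfolding W_def by (rule openin_continuous_map_preimage[OF Fc]) auto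
      have sub: "{s0} \<times> C \<subseteq> W" unfolding W_def F_def using e tX by auto
      obtain U V where UV: "openin euclidean U" "openin X V" "s0 \<in> U" "C \<subseteq> V" "U \<times> V \<subseteq> W"
        using tube_lemma_right[OF Wo cC _ sub] by auto
      show ?thesis
      proof (intro exI conjI ballI allI)
        show "open U" using UV by simp
        show "s0 \<in> U" by fact
        fix s t assume s: "s \<in> U"
        have y: "T t x0 \<in> C" using TC[OF x0] .
        then have "(s, T t x0) \<in> W" using UV s by blast
        then have "F (s, T t x0) < e" unfolding W_def by simp
        then show "\<bar>h (T (s * t) x0) - h (T (s0 * t) x0)\<bar> \<le> e"
          unfolding F_def using Tmul[OF x0] by simp
      qed
    qed
    show ?thesis unfolding LUC_def using c1 c2 c3 by blast
  qed
  define \<phi> where "\<phi> h = \<mu> (\<lambda>s. h (T s x0))" for h :: "'e \<Rightarrow> real"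
  have one_c: "continuous_map X euclideanreal (\<lambda>_. 1::real)" by simp
  have phi_lin: "\<phi> (\<lambda>y. a * h1 y + b * h2 y) = a * \<phi> h1 + b * \<phi> h2"
    if "continuous_map X euclideanreal h1" "continuous_map X euclideanreal h2" for h1 h2 a b
    unfolding \<phi>_def using lin LUC[OF that(1)] LUC[OF that(2)] by simp
  have phi_one: "\<phi> (\<lambda>_. 1) = 1" unfolding \<phi>_def using one by simp
  have phi_cong: "\<phi> h1 = \<phi> h2" if "\<And>y. y \<in> C \<Longrightarrow> h1 y = h2 y" for h1 h2
  proof -
    have "(\<lambda>s. h1 (T s x0)) = (\<lambda>s. h2 (T s x0))" using that TC[OF x0] by auto
    then show ?thesis unfolding \<phi>_def by simp
  qed
  have phi_const: "\<phi> (\<lambda>_. c) = c" for c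
  proof -
    have "\<phi> (\<lambda>y. c * 1 + 0 * 1) = c * \<phi> (\<lambda>_. 1) + 0 * \<phi> (\<lambda>_. 1)"
      by (rule phi_lin[OF one_c one_c])
    then show ?thesis using phi_one by simp
  qed
  have phi_pos: "0 \<le> \<phi> h" if hc: "continuous_map X euclideanreal h" and nn: "\<And>y. y \<in> C \<Longrightarrow> 0 \<le> h y" for h
  proof -
    obtain M where M: "\<forall>y\<in>C. \<bar>h y\<bar> \<le> M" using hbound[OF hc] by blast
    define h' where "h' y = M * 1 + (-1) * h y" for y
    have hc': "continuous_map X euclideanreal h'" unfolding h'_def
      by (intro continuous_map_add continuous_map_real_mult hc) auto
    have "\<phi> h' = M * \<phi> (\<lambda>_. 1) + (-1) * \<phi> h" unfolding h'_def by (rule phi_lin[OF one_c hc])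
    then have e1: "\<phi> h' = M - \<phi> h" using phi_one by simp
    have "\<bar>\<phi> h'\<bar> \<le> (SUP t. \<bar>h' (T t x0)\<bar>)" unfolding \<phi>_def using bnd LUC[OF hc'] by blast
    also have "\<dots> \<le> M"
    proof (rule cSUP_least)
      fix t
      have "T t x0 \<in> C" using TC[OF x0] .
      then show "\<bar>h' (T t x0)\<bar> \<le> M" unfolding h'_def using M nn by force
    qed simp
    finally show ?thesis using e1 by simp
  qed
  have phi_mono: "\<phi> h1 \<le> \<phi> h2"
    if c1: "continuous_map X euclideanreal h1" and c2: "continuous_map X euclideanreal h2"
      and le: "\<And>y. y \<in> C \<Longrightarrow> h1 y \<le> h2 y" for h1 h2
  proof -
    have "0 \<le> \<phi> (\<lambda>y. 1 * h2 y + (-1) * h1 y)"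
      using le by (intro phi_pos continuous_map_add continuous_map_real_mult c1 c2) auto
    then show ?thesis using phi_lin[OF c2 c1, of 1 "-1"] by simp
  qed
  have phi_inv: "\<phi> (\<lambda>y. h (T s y)) = \<phi> h" if hc: "continuous_map X euclideanreal h" for h s
  proof -
    have "(\<lambda>t. h (T s (T t x0))) = (\<lambda>t. (\<lambda>s. h (T s x0)) (s * t))"
      using Tmul[OF x0] by simp
    moreover have "\<mu> (\<lambda>t. (\<lambda>s. h (T s x0)) (s * t)) = \<mu> (\<lambda>s. h (T s x0))"
      using spec[OF bspec[OF inv LUC[OF hc]], of s] by simp
    ultimately show ?thesis unfolding \<phi>_def by simp
  qed
  define full where "full A \<longleftrightarrow> (\<forall>h. continuous_map X euclideanreal h \<and> (\<forall>y\<in>C. 0 \<le> h y)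
      \<and> (\<forall>y\<in>A. h y = 0) \<longrightarrow> \<phi> h = 0)" for A
  have full_ne: "A \<noteq> {}" if "full A" for A
  proof
    assume "A = {}"
    then have "\<phi> (\<lambda>_. 1) = 0" using that one_c unfolding full_def by auto
    then show False using phi_one by simp
  qed
  have full_T: "full (T s ` C)" for s
    unfolding full_def
  proof (intro allI impI)
    fix h assume h: "continuous_map X euclideanreal h \<and> (\<forall>y\<in>C. 0 \<le> h y) \<and> (\<forall>y\<in>T s ` C. h y = 0)"
    have "\<phi> (\<lambda>y. h (T s y)) = \<phi> (\<lambda>_. 0)" using h by (intro phi_cong) auto
    then show "\<phi> h = 0" using phi_inv[of h s] h phi_const[of 0] by simp
  qed
  have normal: "normal_space X" using cpt haus compact_Hausdorff_or_regular_imp_normal_space by blast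
  have full_inter: "full (A \<inter> B)"
    if fA: "full A" and fB: "full B" and cA: "closedin X A" and cB: "closedin X B" for A B
    unfolding full_def
  proof (intro allI impI)
    fix h assume h: "continuous_map X euclideanreal h \<and> (\<forall>y\<in>C. 0 \<le> h y) \<and> (\<forall>y\<in>A \<inter> B. h y = 0)"
    have hc: "continuous_map X euclideanreal h" using h by blast
    have AC: "A \<subseteq> C" "B \<subseteq> C" using cA cB tX closedin_subset by auto
    have ge: "0 \<le> \<phi> h" using h by (intro phi_pos) auto
    have le: "\<phi> h \<le> \<epsilon>" if \<epsilon>: "\<epsilon> > 0" for \<epsilon>
    proof -
      define P where "P = {y \<in> topspace X. h y \<in> {\<epsilon>..}} \<inter> A"
      define Q where "Q = {y \<in> topspace X. h y \<in> {\<epsilon>..}} \<inter> B"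
      have cl: "closedin X {y \<in> topspace X. h y \<in> {\<epsilon>..}}"
        by (rule closedin_continuous_map_preimage[OF hc]) auto
      have cP: "closedin X P" unfolding P_def using cl cA by (rule closedin_Int)
      have cQ: "closedin X Q" unfolding Q_def using cl cB by (rule closedin_Int)
      have dj: "disjnt Q P" unfolding P_def Q_def disjnt_def using h \<epsilon> by force
      obtain u where u: "continuous_map X (top_of_set {0..1}) u" "u ` Q \<subseteq> {0}" "u ` P \<subseteq> {1::real}"
        using Urysohn_lemma[OF normal cQ cP dj, of 0 1] by auto
      have uc: "continuous_map X euclideanreal u" and u01: "\<And>y. y \<in> C \<Longrightarrow> 0 \<le> u y \<and> u y \<le> 1"
        using u(1) tX by (auto simp: continuous_map_in_subtopology)
      define k where "k y = max (h y - \<epsilon>) 0" for y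
      have kc: "continuous_map X euclideanreal k" unfolding k_def
        by (intro continuous_map_real_max continuous_map_diff hc) auto
      define k1 where "k1 y = k y * u y" for y
      define k2 where "k2 y = k y * (1 - u y)" for y
      have k1c: "continuous_map X euclideanreal k1" unfolding k1_def
        by (intro continuous_map_real_mult kc uc)
      have k2c: "continuous_map X euclideanreal k2" unfolding k2_def
        by (intro continuous_map_real_mult continuous_map_diff kc uc) auto
      have "\<phi> k1 = 0" using fB unfolding full_def
      proof (elim allE impE)
        show "continuous_map X euclideanreal k1 \<and> (\<forall>y\<in>C. 0 \<le> k1 y) \<and> (\<forall>y\<in>B. k1 y = 0)"
        proof (intro conjI ballI k1c)
          fix y assume "y \<in> C" then show "0 \<le> k1 y" unfolding k1_def k_def using u01 by simp
        next
          fix y assume y: "y \<in> B"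
          show "k1 y = 0"
          proof (cases "h y \<ge> \<epsilon>")
            case True
            then have "y \<in> Q" unfolding Q_def using y AC tX by auto
            then show ?thesis using u(2) unfolding k1_def by auto
          next
            case False then show ?thesis unfolding k1_def k_def by simp
          qed
        qed
      qed
      moreover have "\<phi> k2 = 0" using fA unfolding full_def
      proof (elim allE impE)
        show "continuous_map X euclideanreal k2 \<and> (\<forall>y\<in>C. 0 \<le> k2 y) \<and> (\<forall>y\<in>A. k2 y = 0)"
        proof (intro conjI ballI k2c)
          fix y assume "y \<in> C" then show "0 \<le> k2 y" unfolding k2_def k_def using u01 by simp
        next
          fix y assume y: "y \<in> A"
          show "k2 y = 0"
          proof (cases "h y \<ge> \<epsilon>")
            case True
            then have "y \<in> P" unfolding P_def using y AC tX by auto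
            then show ?thesis using u(3) unfolding k2_def by auto
          next
            case False then show ?thesis unfolding k2_def k_def by simp
          qed
        qed
      qed
      ultimately have "\<phi> (\<lambda>y. 1 * k1 y + 1 * k2 y) = 0" using phi_lin[OF k1c k2c, of 1 1] by simp
      moreover have "(\<lambda>y. 1 * k1 y + 1 * k2 y) = k" unfolding k1_def k2_def by (auto simp: algebra_simps)
      ultimately have k0: "\<phi> k = 0" by simp
      have "\<phi> h \<le> \<phi> (\<lambda>y. 1 * k y + \<epsilon> * 1)"
        by (intro phi_mono hc continuous_map_add continuous_map_real_mult kc) (auto simp: k_def)
      also have "\<dots> = \<epsilon>" using phi_lin[OF kc one_c, of 1 \<epsilon>] k0 phi_one by simp
      finally show ?thesis .
    qed
    have "\<phi> h \<le> 0"
    proof (rule ccontr)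
      assume "\<not> \<phi> h \<le> 0"
      then show False using le[of "\<phi> h / 2"] by simp
    qed
    then show "\<phi> h = 0" using ge by simp
  qed
  have clT: "closedin X (T s ` C)" for s
    by (rule compactin_imp_closedin[OF haus image_compactin[OF cC Tcont]])
  have fin: "full (\<Inter>s\<in>F. T s ` C) \<and> closedin X (\<Inter>s\<in>F. T s ` C)" if "finite F" "F \<noteq> {}" for F
    using that
  proof (induction F rule: finite_ne_induct)
    case (singleton s) then show ?case using full_T clT by simp
  next
    case (insert s F)
    then show ?case using full_inter[OF full_T _ clT] clT by (auto intro: closedin_Int)
  qed
  let ?U = "range (\<lambda>s. T s ` C)"
  have "\<Inter>?U \<noteq> {}" using cpt unfolding compact_space_fip
  proof (elim allE impE)
    show "(\<forall>D\<in>?U. closedin X D) \<and> (\<forall>\<F>. finite \<F> \<and> \<F> \<subseteq> ?U \<longrightarrow> \<Inter>\<F> \<noteq> {})"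
    proof (intro conjI allI impI ballI)
      fix D assume "D \<in> ?U" then show "closedin X D" using clT by auto
    next
      fix \<F> assume F: "finite \<F> \<and> \<F> \<subseteq> ?U"
      then obtain F where F': "finite F" "\<F> = (\<lambda>s. T s ` C) ` F"
        by (meson finite_subset_image)
      show "\<Inter>\<F> \<noteq> {}"
      proof (cases "F = {}")
        case True then show ?thesis using F' by simp
      next
        case False then show ?thesis using fin[OF F'(1) False] full_ne F'(2) by simp
      qed
    qed
  qed
  then obtain x where x: "x \<in> \<Inter>?U" by blast
  then have "x \<in> T undefined ` C" by blast
  then have "x \<in> C" using TC by blast
  then show ?thesis using x by blast
qed

theorem corollary3p12:
  fixes T :: "'s::{semigroup_mult, t2_space} \<Rightarrow> ('f::banach \<Rightarrow>\<^sub>L real) \<Rightarrow> ('f \<Rightarrow>\<^sub>L real)"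
    and C :: "('f \<Rightarrow>\<^sub>L real) set"
  assumes "semitopological_semigroup TYPE('s)"
    and "left_amenable TYPE('s)"
    and "C \<noteq> {}"
    and "compactin weak_star_topology C"
    and "representation_on C T"
    and "\<exists>G. (\<forall>g\<in>G. (\<forall>x\<in>C. g x \<in> C) \<and> firmly_nonexpansive_on C g) \<and>
             (\<lambda>s. restrict (T s) C) ` UNIV = (\<lambda>g. restrict g C) ` comp_semigroup G"
    and "continuous_map (prod_topology euclidean (subtopology weak_star_topology C))
                        (subtopology weak_star_topology C) (\<lambda>(s, x). T s x)"
  shows "\<exists>x\<in>C. \<forall>s. T s x = x"
proof -
  note amen = assms(2) and Cne = assms(3) and cpt = assms(4) and rep = assms(5) and cont = assms(7)
  obtain G where Gp: "\<forall>g\<in>G. (\<forall>x\<in>C. g x \<in> C) \<and> firmly_nonexpansive_on C g"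
    and eqR: "(\<lambda>s. restrict (T s) C) ` UNIV = (\<lambda>g. restrict g C) ` comp_semigroup G"
    using assms(6) by blast
  let ?X = "subtopology weak_star_topology C"
  have tX: "topspace ?X = C" by simp
  have cX: "compact_space ?X" using cpt by (rule compact_space_subtopology)
  have hX: "Hausdorff_space ?X" using wst_Hausdorff by (rule Hausdorff_space_subtopology)
  obtain x where xC: "x \<in> C" and xin: "\<And>s. x \<in> T s ` C"
    using common_point[OF amen tX Cne cX hX rep cont] by blast
  have TC: "T s y \<in> C" if "y \<in> C" for s y using rep that unfolding representation_on_def by blast
  have Tmul: "T (s * t) y = T s (T t y)" if "y \<in> C" for s t y
    using rep that unfolding representation_on_def by blast
  have "\<exists>M. \<forall>x\<in>C. \<bar>blinfun_apply x f\<bar> \<le> M" for f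
  proof -
    have "continuous_map ?X euclideanreal (\<lambda>x. blinfun_apply x f)"
      by (rule continuous_map_from_subtopology[OF wst_ev_cont])
    then have "compactin euclideanreal ((\<lambda>x. blinfun_apply x f) ` C)"
      using image_compactin cX tX unfolding compact_space_def by metis
    then have "bounded ((\<lambda>x. blinfun_apply x f) ` C)" by (simp add: compact_imp_bounded)
    then show ?thesis unfolding bounded_iff by auto
  qed
  then obtain R where R: "\<And>x. x \<in> C \<Longrightarrow> norm x \<le> R" using ubp by metis
  have gfix: "g x = x" if gG: "g \<in> G" for g
  proof -
    have gC: "\<And>y. y \<in> C \<Longrightarrow> g y \<in> C" and fn: "firmly_nonexpansive_on C g" using Gp gG by auto
    have "restrict g C \<in> (\<lambda>s. restrict (T s) C) ` UNIV"
      unfolding eqR using gG by (blast intro: comp_semigroup.gen)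
    then obtain t where t: "restrict (T t) C = restrict g C" by auto
    have gt: "g y = T t y" if "y \<in> C" for y
      using fun_cong[OF t, of y] that by simp
    have pow: "\<exists>s. \<forall>y\<in>C. (g ^^ Suc n) y = T s y" for n
    proof (induction n)
      case 0 then show ?case using gt by auto
    next
      case (Suc n)
      then obtain s where s: "\<forall>y\<in>C. (g ^^ Suc n) y = T s y" by blast
      have "\<forall>y\<in>C. (g ^^ Suc (Suc n)) y = T (t * s) y"
        using s gt TC Tmul by simp
      then show ?case by blast
    qed
    have xin': "x \<in> (g ^^ n) ` C" for n
    proof (cases n)
      case 0 then show ?thesis using xC by simp
    next
      case (Suc m)
      obtain s where s: "\<forall>y\<in>C. (g ^^ Suc m) y = T s y" using pow by blast
      have "(g ^^ Suc m) ` C = T s ` C" using s by (intro image_cong) auto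
      then show ?thesis using xin Suc by simp
    qed
    have firm: "norm (g a - g b) \<le> norm ((1/2) *\<^sub>R (a - b) + (1/2) *\<^sub>R (g a - g b))"
      if "a \<in> C" "b \<in> C" for a b
    proof -
      have "\<forall>\<alpha>::real. 0 < \<alpha> \<and> \<alpha> < 1 \<longrightarrow>
        norm (g a - g b) \<le> norm (\<alpha> *\<^sub>R (a - b) + (1 - \<alpha>) *\<^sub>R (g a - g b))"
        using fn that unfolding firmly_nonexpansive_on_def by blast
      then have "norm (g a - g b) \<le> norm ((1/2) *\<^sub>R (a - b) + (1 - 1/2) *\<^sub>R (g a - g b))"
        by (metis (mono_tags) field_sum_of_halves half_gt_zero_iff less_add_same_cancel1 zero_less_one)
      then show ?thesis by (simp add: field_simps)
    qed
    show ?thesis by (rule asym_fix[OF gC firm R xC xin'])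
  qed
  have cfix: "f x = x" if "f \<in> comp_semigroup G" for f
    using that by (induction rule: comp_semigroup.induct) (auto simp: gfix)
  have "T s x = x" for s
  proof -
    have "restrict (T s) C \<in> (\<lambda>g. restrict g C) ` comp_semigroup G" unfolding eqR[symmetric] by blast
    then obtain f where f: "f \<in> comp_semigroup G" "restrict (T s) C = restrict f C" by blast
    have "T s x = f x" using fun_cong[OF f(2), of x] xC by simp
    then show ?thesis using cfix[OF f(1)] by simp
  qed
  then show ?thesis using xC by blast
qed

end
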